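(* Let $(\Phi,\mathtt{Prg},\mathrm{AT})$ be a CLC SPL with feature model $\Phi=(\mathcal F,\phi)$, and let $p\subseteq\mathcal F$ be a valid product, i.e. $p\models\phi$. If $\phi\vdash \mathtt{Prg}\ \textsc{ok}$ (family-based typing), then $\vdash [\![\mathtt{Prg}]\!]_p\ \textsc{ok}$ (LC typing), i.e. the variant identified by $p$ is a well-typed LC program.
   Context: **Lightweight C (LC).** Types: $T ::= \mathtt{int}\mid \mathtt{void}* \mid \mathtt{struct}\ s*$ ($s$ a struct name). Expressions: $e ::= n$ (integer literal) $\mid \mathtt{NULL}\mid x$ (parameter name) $\mid f(e_1,\dots,e_k)$ ($k\ge0$) $\mid e\texttt{->}m \mid e\texttt{->}m=e \mid e\,?\,e:e \mid (e_1,\dots,e_k)$ ($k\ge1$, a parenthesized expression sequence) $\mid \mathsf{uop}\ e\mid e\ \mathsf{bop}\ e\mid \mathtt{MALLOC}(\mathtt{struct}\ s)\mid \mathtt{MFREE}(e)$. A struct definition is $\mathtt{struct}\ s\{T_1\,m_1;\dots;T_k\,m_k;\};$ (distinct member names); a function definition is $T_0\ f(T_1\,x_1,\dots,T_k\,x_k)\{\mathtt{return}\ e;\}$ (distinct parameter names); a program $\mathtt{Prg}=\overline{SD}\ \overline{FD}$ is a sequence of struct definitions followed by a sequence of function definitions, with distinct struct names and distinct function names. $\mathtt{Prg}$ is regarded as a finite map: $\mathtt{Prg}(s)$ is the definition of struct $s$, $\mathtt{Prg}(s)(m)=$ "$T\ m$" is the declaration of member $m$ in it, $\mathtt{Prg}(f)$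 is the definition of function $f$; $\mathrm{dom}(\overline{SD})$ is the set of defined struct names and $\mathrm{dom}(\mathtt{Prg})$ the set of defined struct and function names. $\mathtt{Prg}$ is *sane* if (1) every struct name occurring anywhere in $\mathtt{Prg}$ is defined in $\mathtt{Prg}$, (2) every function name occurring in the function definitions is defined in $\mathtt{Prg}$, (3) $\mathtt{Prg}(\mathtt{main})=\mathtt{int\ main}()\{\mathtt{return}\ e;\}$ for some $e$. Operator types: unary $-:(\mathtt{int})\to\mathtt{int}$; unary $!:(T)\to\mathtt{int}$ for every type $T$; binary $+,-,*,/,\&\&,||,<,<=,>,>=:(\mathtt{int},\mathtt{int})\to\mathtt{int}$; binary $==,!=:(T,T)\to\mathtt{int}$ for every type $T$. Subtyping $\le$ is the reflexive closure of $\mathtt{void}*\le\mathtt{struct}\ s*$ for every struct $s$ defined in the program; $\max_\le\{T_1,T_2\}$ is the greater of two $\le$-comparable types. LC typing (relative to the program under consideration; $\Gamma$ a finite map from parameter names to types): (T-prg) if $\mathtt{Prg}$ is sane, $\mathtt{Prg}=\overline{SD}\,\overline{FD}$ and $\vdash FD\ \textsc{ok}$ for every $FD$ in $\overline{FD}$, then $\vdash\mathtt{Prg}\ \textsc{ok}$. (T-fun) if $x_1{:}T_1,\dots,x_k{:}T_k\vdash e:T'$ and $T'\le T_0$ then $\vdash T_0\,f(T_1x_1,\dots,T_kx_k)\{\mathtt{return}\ e;\}\ \textsc{ok}$. (T-int) $\Gamma\vdash n:\mathtt{int}$. (T-null) $\Gamma\vdash\mathtt{NULL}:\mathtt{void}*$.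 (T-par) if $x{:}T\in\Gamma$ then $\Gamma\vdash x:T$. (T-app) if $\mathtt{Prg}(f)=T_0\,f(T_1x_1,\dots,T_kx_k)\{\dots\}$, and $\Gamma\vdash e_i:T_i'$, $T_i'\le T_i$ for $i=1..k$ (exactly $k$ arguments), then $\Gamma\vdash f(e_1,\dots,e_k):T_0$. (T-member) if $\Gamma\vdash e_0:\mathtt{struct}\ s*$ and $\mathtt{Prg}(s)(m)=T\,m$ then $\Gamma\vdash e_0\texttt{->}m:T$. (T-assign) if additionally $\Gamma\vdash e_1:T_1$, $T_1\le T$, then $\Gamma\vdash e_0\texttt{->}m=e_1:T$. (T-cond) if $\Gamma\vdash e_j:T_j$ ($j=0,1,2$) and $T_3=\max_\le\{T_1,T_2\}$ then $\Gamma\vdash e_0?e_1:e_2:T_3$. (T-seq) if $\Gamma\vdash e_i:T_i$ for $i=1..n$ then $\Gamma\vdash(e_1,\dots,e_n):T_n$. (T-uop) if $\Gamma\vdash e_0:T_0$ and $\mathsf{uop}$ has type $(T_0)\to\mathtt{int}$ then $\Gamma\vdash\mathsf{uop}\,e_0:\mathtt{int}$. (T-bop) if $\Gamma\vdash e_1:T_1$, $\Gamma\vdash e_2:T_2$, $T_3=\max_\le\{T_1,T_2\}$ and $\mathsf{bop}$ has type $(T_3,T_3)\to\mathtt{int}$ then $\Gamma\vdash e_1\,\mathsf{bop}\,e_2:\mathtt{int}$. (T-malloc) if $s\in\mathrm{dom}(\overline{SD})$ then $\Gamma\vdash\mathtt{MALLOC}(\mathtt{struct}\ s):\mathtt{struct}\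 s*$. (T-mfree) if $\Gamma\vdash e_0:\mathtt{struct}\ s*$ then $\Gamma\vdash\mathtt{MFREE}(e_0):\mathtt{void}*$. **Colored LC (CLC).** A feature model $\Phi=(\mathcal F,\phi)$: $\mathcal F$ a finite set of features, $\phi$ a propositional formula over $\mathcal F$ (connectives $!,\&\&,||$, constants $0,1$). A product is $p\subseteq\mathcal F$; $p\models\psi$ means $\psi$ is true under the assignment giving 1 to features in $p$ and 0 to the others; $p$ is valid if $p\models\phi$. For formulas, $\theta\models\theta'$ means $\theta\Rightarrow\theta'$ is valid; $\psi_1\Rightarrow\psi_2$ abbreviates $!\psi_1||\psi_2$ and $\psi_1\Leftrightarrow\psi_2$ the conjunction of both implications. An SPL is a triple $(\Phi,\mathtt{Prg},\mathrm{AT})$ with $\mathtt{Prg}$ an LC program (the code base) and $\mathrm{AT}$ an annotation table assigning a propositional formula over $\mathcal F$ to each occurrence of an annotable fragment of $\mathtt{Prg}$; annotable fragments are: each struct definition, each member declaration $T\,m$, each function definition, each formal parameter declaration $T\,x$, each argument of a function call, and each element of a parenthesized sequence. Occurrences not explicitly annotated have annotation $1$. Abbreviations: $\mathrm{AT}(s)=\mathrm{AT}(\mathtt{Prg}(s))$ is the annotation of the definition of struct $s$, $\mathrm{AT}(f)=\mathrm{AT}(\mathtt{Prg}(f))$ that of function $f$; $\mathrm{AT}(\mathtt{int})=\mathrm{AT}(\mathtt{void}* )=1$, $\mathrm{AT}(\mathtt{struct}\ s* )=\mathrm{AT}(\mathtt{Prg}(s))$; for equal-length sequences, $\mathrm{AT}(\bar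 a)\odot\mathrm{AT}(\bar b)$ ($\odot\in\{\Rightarrow,\Leftrightarrow\}$) is the conjunction of $\mathrm{AT}(a_i)\odot\mathrm{AT}(b_i)$; $\exists(e_1,\dots,e_n)=\mathrm{AT}(e_1)||\cdots||\mathrm{AT}(e_n)$; $\mathtt{neverLast}(k,(e_1,\dots,e_n))=\,!\mathrm{AT}(e_k)||\mathrm{AT}(e_{k+1})||\cdots||\mathrm{AT}(e_n)$. An annotated type environment $\Delta$ maps parameter names to pairs written $x{:}T$ with $\psi$ ($T$ a type, $\psi$ a formula). Family-based typing of $(\Phi,\mathtt{Prg},\mathrm{AT})$: (FT-prg) if $\mathtt{Prg}$ is sane, $\mathrm{AT}(\mathtt{main})=1$, $\mathtt{Prg}=\overline{SD}\,\overline{FD}$, $\phi\,\&\&\,\mathrm{AT}(SD)\vdash SD\ \textsc{ok}$ for each $SD$ in $\overline{SD}$ and $\phi\,\&\&\,\mathrm{AT}(FD)\vdash FD\ \textsc{ok}$ for each $FD$ in $\overline{FD}$, then $\phi\vdash\mathtt{Prg}\ \textsc{ok}$. (FT-struct) if $\theta\models\mathrm{AT}(T_i\,m_i)\Rightarrow\mathrm{AT}(T_i)$ for all $i$, then $\theta\vdash\mathtt{struct}\ s\{T_1m_1;\dots;T_km_k;\}\ \textsc{ok}$. (FT-fun) if $\theta\models\mathrm{AT}(T_0)$, $\theta\models\mathrm{AT}(T_i\,x_i)\Rightarrow\mathrm{AT}(T_i)$ for all $i$, $\theta;\ x_1{:}T_1\text{ with }\mathrm{AT}(T_1x_1),\dots,x_k{:}T_k\text{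 with }\mathrm{AT}(T_kx_k)\vdash e:T'$ and $T'\le T_0$, then $\theta\vdash T_0\,f(T_1x_1,\dots,T_kx_k)\{\mathtt{return}\ e;\}\ \textsc{ok}$. (FT-int) $\theta;\Delta\vdash n:\mathtt{int}$. (FT-null) $\theta;\Delta\vdash\mathtt{NULL}:\mathtt{void}*$. (FT-par) if $x{:}T$ with $\psi$ is in $\Delta$ and $\theta\models\psi$ then $\theta;\Delta\vdash x:T$. (FT-app) if $\mathtt{Prg}(f)=T_0\,f(T_1x_1,\dots,T_kx_k)\{\dots\}$, $\theta\models\mathrm{AT}(\mathtt{Prg}(f))$, and for $i=1..k$ (exactly $k$ arguments) $\theta;\Delta\vdash e_i:T_i'$, $T_i'\le T_i$ and $\theta\models\mathrm{AT}(e_i)\Leftrightarrow\mathrm{AT}(T_ix_i)$, then $\theta;\Delta\vdash f(e_1,\dots,e_k):T_0$. (FT-member) if $\theta;\Delta\vdash e_0:\mathtt{struct}\ s*$, $\mathtt{Prg}(s)(m)=T\,m$ and $\theta\models\mathrm{AT}(T\,m)$ then $\theta;\Delta\vdash e_0\texttt{->}m:T$. (FT-assign) if additionally $\theta;\Delta\vdash e_1:T_1$ and $T_1\le T$ then $\theta;\Delta\vdash e_0\texttt{->}m=e_1:T$. (FT-cond), (FT-uop), (FT-bop), (FT-mfree): as T-cond, T-uop, T-bop, T-mfree with every judgment $\Gamma\vdash$ replaced by $\theta;\Delta\vdash$. (FT-seq) if $\theta\models\exists(e_1,\dots,e_n)$, $\theta\,\&\&\,\mathrm{AT}(e_i);\Delta\vdash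 e_i:T_i$ for all $i$, $T=T_n$, and $\theta\models\mathtt{neverLast}(i,(e_1,\dots,e_n))$ for every $i$ with $T_i\ne T$, then $\theta;\Delta\vdash(e_1,\dots,e_n):T$. (FT-malloc) if $s\in\mathrm{dom}(\overline{SD})$ and $\theta\models\mathrm{AT}(\mathtt{Prg}(s))$ then $\theta;\Delta\vdash\mathtt{MALLOC}(\mathtt{struct}\ s):\mathtt{struct}\ s*$. **Variant generation.** For a product $p$ and a sequence of annotable occurrences: $[\![\,]\!]_p$ is empty; $[\![a_1\dots a_n]\!]_p=\langle\!\langle a_1\rangle\!\rangle_p\,[\![a_2\dots a_n]\!]_p$ if $p\models\mathrm{AT}(a_1)$, and $=[\![a_2\dots a_n]\!]_p$ otherwise. $\langle\!\langle\mathtt{struct}\ s\{\overline{T\,m};\}\rangle\!\rangle_p=\mathtt{struct}\ s\{[\![\overline{T\,m}]\!]_p\}$; $\langle\!\langle T_0f(\overline{T\,x})\{\mathtt{return}\ e;\}\rangle\!\rangle_p=T_0f([\![\overline{T\,x}]\!]_p)\{\mathtt{return}\ \langle\!\langle e\rangle\!\rangle_p;\}$; $\langle\!\langle T\,m\rangle\!\rangle_p=T\,m$, $\langle\!\langle T\,x\rangle\!\rangle_p=T\,x$; $\langle\!\langle f(\bar e)\rangle\!\rangle_p=f([\![\bar e]\!]_p)$; $\langle\!\langle(\tilde e)\rangle\!\rangle_p=([\![\tilde e]\!]_p)$; on all other expression forms $\langle\!\langle\cdot\rangle\!\rangle_p$ acts homomorphically on immediate subexpressions ($n$, $\mathtt{NULL}$,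 $x$, $\mathtt{MALLOC}(\mathtt{struct}\ s)$ unchanged). The variant is $[\![\mathtt{Prg}]\!]_p=[\![\overline{SD}]\!]_p\,[\![\overline{FD}]\!]_p$ for $\mathtt{Prg}=\overline{SD}\,\overline{FD}$. *)

theory Defs
  imports Main
begin

datatype 'f form =
    FVar 'f
  | FNot "'f form"
  | FAnd "'f form" "'f form"
  | FOr "'f form" "'f form"
  | FFalse
  | FTrue

primrec fvars :: "'f form \<Rightarrow> 'f set" where
  "fvars (FVar x) = {x}"
| "fvars (FNot a) = fvars a"
| "fvars (FAnd a b) = fvars a \<union> fvars b"
| "fvars (FOr a b) = fvars a \<union> fvars b"
| "fvars FFalse = {}"
| "fvars FTrue = {}"

primrec models :: "'f set \<Rightarrow> 'f form \<Rightarrow> bool" where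
  "models p (FVar x) = (x \<in> p)"
| "models p (FNot a) = (\<not> models p a)"
| "models p (FAnd a b) = (models p a \<and> models p b)"
| "models p (FOr a b) = (models p a \<or> models p b)"
| "models p FFalse = False"
| "models p FTrue = True"

definition FImp :: "'f form \<Rightarrow> 'f form \<Rightarrow> 'f form" where
  "FImp a b = FOr (FNot a) b"

definition FIff :: "'f form \<Rightarrow> 'f form \<Rightarrow> 'f form" where
  "FIff a b = FAnd (FImp a b) (FImp b a)"

definition FDisj :: "'f form list \<Rightarrow> 'f form" where
  "FDisj xs = foldr FOr xs FFalse"

definition entails :: "'f form \<Rightarrow> 'f form \<Rightarrow> bool" where
  "entails \<theta> \<theta>' = (\<forall>p. models p (FImp \<theta> \<theta>'))"

section \<open>Syntax of LC, parametric in the annotation of annotable fragments\<close>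

type_synonym sname = string
type_synonym mname = string
type_synonym fname = string
type_synonym vname = string

datatype ty = TInt | TVoid | TStruct sname

datatype uop = UNeg | UNot
datatype bop = BPlus | BMinus | BMul | BDiv | BAnd | BOr | BLt | BLe | BGt | BGe | BEq | BNe

text \<open>Annotable occurrences (function-call arguments, sequence elements) carry an
  annotation of type 'a.  Plain LC uses 'a = unit; CLC uses 'a = 'f form
  (an unannotated occurrence carries FTrue).\<close>
datatype 'a expr =
    Lit int
  | Null
  | Par vname
  | App fname "('a \<times> 'a expr) list"
  | Member "'a expr" mname
  | Assign "'a expr" mname "'a expr"
  | Cond "'a expr" "'a expr" "'a expr"
  | Seq "('a \<times> 'a expr) list"
  | Uop uop "'a expr"
  | Bop bop "'a expr" "'a expr"
  | Malloc sname
  | Mfree "'a expr"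

text \<open>struct s { T1 m1; ...; Tk mk; } with annotation of the definition and of each member.\<close>
datatype 'a sdef = SDef (s_ann: 'a) (s_name: sname) (s_mems: "('a \<times> ty \<times> mname) list")

text \<open>T0 f(T1 x1, ..., Tk xk) { return e; } with annotation of the definition and of each parameter.\<close>
datatype 'a fdef = FDef (f_ann: 'a) (f_ret: ty) (f_name: fname)
  (f_pars: "('a \<times> ty \<times> vname) list") (f_body: "'a expr")

datatype 'a prog = Prog (p_structs: "'a sdef list") (p_funs: "'a fdef list")

type_synonym lc_prog = "unit prog"
type_synonym 'f clc_prog = "'f form prog"

definition lookup_struct :: "'a prog \<Rightarrow> sname \<Rightarrow> 'a sdef option" where
  "lookup_struct P s = find (\<lambda>d. s_name d = s) (p_structs P)"

definition lookup_fun :: "'a prog \<Rightarrow> fname \<Rightarrow> 'a fdef option" where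
  "lookup_fun P f = find (\<lambda>d. f_name d = f) (p_funs P)"

definition lookup_member :: "'a prog \<Rightarrow> sname \<Rightarrow> mname \<Rightarrow> ('a \<times> ty) option" where
  "lookup_member P s m =
     (case lookup_struct P s of
        None \<Rightarrow> None
      | Some d \<Rightarrow> map_option (\<lambda>(a, T, _). (a, T)) (find (\<lambda>(a, T, m'). m' = m) (s_mems d)))"

definition struct_dom :: "'a prog \<Rightarrow> sname set" where
  "struct_dom P = set (map s_name (p_structs P))"

fun wf_expr :: "'a expr \<Rightarrow> bool" where
  "wf_expr (App f args) = (\<forall>ae \<in> set args. wf_expr (snd ae))"
| "wf_expr (Member e m) = wf_expr e"
| "wf_expr (Assign e m e') = (wf_expr e \<and> wf_expr e')"
| "wf_expr (Cond e1 e2 e3) = (wf_expr e1 \<and> wf_expr e2 \<and> wf_expr e3)"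
| "wf_expr (Seq es) = (es \<noteq> [] \<and> (\<forall>ae \<in> set es. wf_expr (snd ae)))"
| "wf_expr (Uop u e) = wf_expr e"
| "wf_expr (Bop b e e') = (wf_expr e \<and> wf_expr e')"
| "wf_expr (Mfree e) = wf_expr e"
| "wf_expr _ = True"

definition wf_prog :: "'a prog \<Rightarrow> bool" where
  "wf_prog P =
     (distinct (map s_name (p_structs P)) \<and>
      distinct (map f_name (p_funs P)) \<and>
      (\<forall>d \<in> set (p_structs P). distinct (map (\<lambda>(a, T, m). m) (s_mems d))) \<and>
      (\<forall>d \<in> set (p_funs P). distinct (map (\<lambda>(a, T, x). x) (f_pars d)) \<and> wf_expr (f_body d)))"

primrec ty_structs :: "ty \<Rightarrow> sname set" where
  "ty_structs TInt = {}"
| "ty_structs TVoid = {}"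
| "ty_structs (TStruct s) = {s}"

fun expr_structs :: "'a expr \<Rightarrow> sname set" where
  "expr_structs (App f args) = (\<Union>ae \<in> set args. expr_structs (snd ae))"
| "expr_structs (Member e m) = expr_structs e"
| "expr_structs (Assign e m e') = expr_structs e \<union> expr_structs e'"
| "expr_structs (Cond e1 e2 e3) = expr_structs e1 \<union> expr_structs e2 \<union> expr_structs e3"
| "expr_structs (Seq es) = (\<Union>ae \<in> set es. expr_structs (snd ae))"
| "expr_structs (Uop u e) = expr_structs e"
| "expr_structs (Bop b e e') = expr_structs e \<union> expr_structs e'"
| "expr_structs (Malloc s) = {s}"
| "expr_structs (Mfree e) = expr_structs e"
| "expr_structs _ = {}"

fun expr_funs :: "'a expr \<Rightarrow> fname set" where
  "expr_funs (App f args) = insert f (\<Union>ae \<in> set args. expr_funs (snd ae))"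
| "expr_funs (Member e m) = expr_funs e"
| "expr_funs (Assign e m e') = expr_funs e \<union> expr_funs e'"
| "expr_funs (Cond e1 e2 e3) = expr_funs e1 \<union> expr_funs e2 \<union> expr_funs e3"
| "expr_funs (Seq es) = (\<Union>ae \<in> set es. expr_funs (snd ae))"
| "expr_funs (Uop u e) = expr_funs e"
| "expr_funs (Bop b e e') = expr_funs e \<union> expr_funs e'"
| "expr_funs (Mfree e) = expr_funs e"
| "expr_funs _ = {}"

definition prog_structs :: "'a prog \<Rightarrow> sname set" where
  "prog_structs P =
     (\<Union>d \<in> set (p_structs P). insert (s_name d) (\<Union>(a, T, m) \<in> set (s_mems d). ty_structs T)) \<union>
     (\<Union>d \<in> set (p_funs P). ty_structs (f_ret d) \<union> (\<Union>(a, T, x) \<in> set (f_pars d). ty_structs T)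
                              \<union> expr_structs (f_body d))"

definition fun_dom :: "'a prog \<Rightarrow> fname set" where
  "fun_dom P = set (map f_name (p_funs P))"

definition sane :: "'a prog \<Rightarrow> bool" where
  "sane P =
     (prog_structs P \<subseteq> struct_dom P \<and>
      (\<Union>d \<in> set (p_funs P). insert (f_name d) (expr_funs (f_body d))) \<subseteq> fun_dom P \<and>
      (\<exists>a e. lookup_fun P ''main'' = Some (FDef a TInt ''main'' [] e)))"

definition subty :: "'a prog \<Rightarrow> ty \<Rightarrow> ty \<Rightarrow> bool" where
  "subty P T1 T2 = (T1 = T2 \<or> (\<exists>s. T1 = TVoid \<and> T2 = TStruct s \<and> s \<in> struct_dom P))"

text \<open>T3 = max_<= {T1, T2} (only defined for comparable T1, T2).\<close>
definition is_max :: "'a prog \<Rightarrow> ty \<Rightarrow> ty \<Rightarrow> ty \<Rightarrow> bool" where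
  "is_max P T1 T2 T3 = ((subty P T1 T2 \<and> T3 = T2) \<or> (subty P T2 T1 \<and> T3 = T1))"

primrec uop_ok :: "uop \<Rightarrow> ty \<Rightarrow> bool" where
  "uop_ok UNeg T = (T = TInt)"
| "uop_ok UNot T = True"

fun bop_ok :: "bop \<Rightarrow> ty \<Rightarrow> bool" where
  "bop_ok BEq T = True"
| "bop_ok BNe T = True"
| "bop_ok _ T = (T = TInt)"

section \<open>LC typing\<close>

inductive lc_typ :: "lc_prog \<Rightarrow> (vname \<rightharpoonup> ty) \<Rightarrow> unit expr \<Rightarrow> ty \<Rightarrow> bool" for P where
  T_int: "lc_typ P \<Gamma> (Lit n) TInt"
| T_null: "lc_typ P \<Gamma> Null TVoid"
| T_par: "\<Gamma> x = Some T \<Longrightarrow> lc_typ P \<Gamma> (Par x) T"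
| T_app: "lookup_fun P f = Some (FDef a T0 f pars body) \<Longrightarrow>
          list_all2 (\<lambda>arg par. \<exists>T'. lc_typ P \<Gamma> (snd arg) T' \<and> subty P T' (fst (snd par))) args pars \<Longrightarrow>
          lc_typ P \<Gamma> (App f args) T0"
| T_member: "lc_typ P \<Gamma> e0 (TStruct s) \<Longrightarrow> lookup_member P s m = Some (a, T) \<Longrightarrow>
          lc_typ P \<Gamma> (Member e0 m) T"
| T_assign: "lc_typ P \<Gamma> e0 (TStruct s) \<Longrightarrow> lookup_member P s m = Some (a, T) \<Longrightarrow>
          lc_typ P \<Gamma> e1 T1 \<Longrightarrow> subty P T1 T \<Longrightarrow>
          lc_typ P \<Gamma> (Assign e0 m e1) T"
| T_cond: "lc_typ P \<Gamma> e0 T0 \<Longrightarrow> lc_typ P \<Gamma> e1 T1 \<Longrightarrow> lc_typ P \<Gamma> e2 T2 \<Longrightarrow>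
          is_max P T1 T2 T3 \<Longrightarrow> lc_typ P \<Gamma> (Cond e0 e1 e2) T3"
| T_seq: "es \<noteq> [] \<Longrightarrow> list_all2 (\<lambda>el T. lc_typ P \<Gamma> (snd el) T) es Ts \<Longrightarrow>
          lc_typ P \<Gamma> (Seq es) (last Ts)"
| T_uop: "lc_typ P \<Gamma> e0 T0 \<Longrightarrow> uop_ok u T0 \<Longrightarrow> lc_typ P \<Gamma> (Uop u e0) TInt"
| T_bop: "lc_typ P \<Gamma> e1 T1 \<Longrightarrow> lc_typ P \<Gamma> e2 T2 \<Longrightarrow> is_max P T1 T2 T3 \<Longrightarrow> bop_ok b T3 \<Longrightarrow>
          lc_typ P \<Gamma> (Bop b e1 e2) TInt"
| T_malloc: "s \<in> struct_dom P \<Longrightarrow> lc_typ P \<Gamma> (Malloc s) (TStruct s)"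
| T_mfree: "lc_typ P \<Gamma> e0 (TStruct s) \<Longrightarrow> lc_typ P \<Gamma> (Mfree e0) TVoid"
monos list_all2_mono

definition lc_fun_ok :: "lc_prog \<Rightarrow> unit fdef \<Rightarrow> bool" where
  "lc_fun_ok P d =
     (\<exists>T'. lc_typ P (map_of (map (\<lambda>(a, T, x). (x, T)) (f_pars d))) (f_body d) T'
           \<and> subty P T' (f_ret d))"

definition lc_prog_ok :: "lc_prog \<Rightarrow> bool" where
  "lc_prog_ok P = (sane P \<and> (\<forall>d \<in> set (p_funs P). lc_fun_ok P d))"

section \<open>CLC family-based typing\<close>

definition ty_ann :: "'f clc_prog \<Rightarrow> ty \<Rightarrow> 'f form" where
  "ty_ann P T = (case T of TStruct s \<Rightarrow>
                   (case lookup_struct P s of Some d \<Rightarrow> s_ann d | None \<Rightarrow> FTrue)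
                 | _ \<Rightarrow> FTrue)"

text \<open>neverLast(k, (e_1..e_n)) with 0-based index k.\<close>
definition neverLast :: "nat \<Rightarrow> 'f form list \<Rightarrow> 'f form" where
  "neverLast k as = FOr (FNot (as ! k)) (FDisj (drop (Suc k) as))"

inductive ft_typ :: "'f clc_prog \<Rightarrow> 'f form \<Rightarrow> (vname \<rightharpoonup> ty \<times> 'f form) \<Rightarrow> 'f form expr \<Rightarrow> ty \<Rightarrow> bool"
  for P where
  FT_int: "ft_typ P \<theta> \<Delta> (Lit n) TInt"
| FT_null: "ft_typ P \<theta> \<Delta> Null TVoid"
| FT_par: "\<Delta> x = Some (T, \<psi>) \<Longrightarrow> entails \<theta> \<psi> \<Longrightarrow> ft_typ P \<theta> \<Delta> (Par x) T"
| FT_app: "lookup_fun P f = Some (FDef a T0 f pars body) \<Longrightarrow> entails \<theta> a \<Longrightarrow>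
          list_all2 (\<lambda>arg par. \<exists>T'. ft_typ P \<theta> \<Delta> (snd arg) T' \<and> subty P T' (fst (snd par))
                                 \<and> entails \<theta> (FIff (fst arg) (fst par))) args pars \<Longrightarrow>
          ft_typ P \<theta> \<Delta> (App f args) T0"
| FT_member: "ft_typ P \<theta> \<Delta> e0 (TStruct s) \<Longrightarrow> lookup_member P s m = Some (a, T) \<Longrightarrow>
          entails \<theta> a \<Longrightarrow> ft_typ P \<theta> \<Delta> (Member e0 m) T"
| FT_assign: "ft_typ P \<theta> \<Delta> e0 (TStruct s) \<Longrightarrow> lookup_member P s m = Some (a, T) \<Longrightarrow>
          entails \<theta> a \<Longrightarrow> ft_typ P \<theta> \<Delta> e1 T1 \<Longrightarrow> subty P T1 T \<Longrightarrow>
          ft_typ P \<theta> \<Delta> (Assign e0 m e1) T"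
| FT_cond: "ft_typ P \<theta> \<Delta> e0 T0 \<Longrightarrow> ft_typ P \<theta> \<Delta> e1 T1 \<Longrightarrow> ft_typ P \<theta> \<Delta> e2 T2 \<Longrightarrow>
          is_max P T1 T2 T3 \<Longrightarrow> ft_typ P \<theta> \<Delta> (Cond e0 e1 e2) T3"
| FT_seq: "es \<noteq> [] \<Longrightarrow> entails \<theta> (FDisj (map fst es)) \<Longrightarrow>
          list_all2 (\<lambda>el T. ft_typ P (FAnd \<theta> (fst el)) \<Delta> (snd el) T) es Ts \<Longrightarrow>
          (\<forall>i < length es. Ts ! i \<noteq> last Ts \<longrightarrow> entails \<theta> (neverLast i (map fst es))) \<Longrightarrow>
          ft_typ P \<theta> \<Delta> (Seq es) (last Ts)"
| FT_uop: "ft_typ P \<theta> \<Delta> e0 T0 \<Longrightarrow> uop_ok u T0 \<Longrightarrow> ft_typ P \<theta> \<Delta> (Uop u e0) TInt"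
| FT_bop: "ft_typ P \<theta> \<Delta> e1 T1 \<Longrightarrow> ft_typ P \<theta> \<Delta> e2 T2 \<Longrightarrow> is_max P T1 T2 T3 \<Longrightarrow> bop_ok b T3 \<Longrightarrow>
          ft_typ P \<theta> \<Delta> (Bop b e1 e2) TInt"
| FT_malloc: "lookup_struct P s = Some d \<Longrightarrow> entails \<theta> (s_ann d) \<Longrightarrow>
          ft_typ P \<theta> \<Delta> (Malloc s) (TStruct s)"
| FT_mfree: "ft_typ P \<theta> \<Delta> e0 (TStruct s) \<Longrightarrow> ft_typ P \<theta> \<Delta> (Mfree e0) TVoid"
monos list_all2_mono

definition ft_struct_ok :: "'f clc_prog \<Rightarrow> 'f form \<Rightarrow> 'f form sdef \<Rightarrow> bool" where
  "ft_struct_ok P \<theta> d = (\<forall>(a, T, m) \<in> set (s_mems d). entails \<theta> (FImp a (ty_ann P T)))"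

definition ft_fun_ok :: "'f clc_prog \<Rightarrow> 'f form \<Rightarrow> 'f form fdef \<Rightarrow> bool" where
  "ft_fun_ok P \<theta> d =
     (entails \<theta> (ty_ann P (f_ret d)) \<and>
      (\<forall>(a, T, x) \<in> set (f_pars d). entails \<theta> (FImp a (ty_ann P T))) \<and>
      (\<exists>T'. ft_typ P \<theta> (map_of (map (\<lambda>(a, T, x). (x, (T, a))) (f_pars d))) (f_body d) T'
            \<and> subty P T' (f_ret d)))"

definition ft_prog_ok :: "'f form \<Rightarrow> 'f clc_prog \<Rightarrow> bool" where
  "ft_prog_ok \<phi> P =
     (sane P \<and>
      (\<exists>d. lookup_fun P ''main'' = Some d \<and> f_ann d = FTrue) \<and>
      (\<forall>d \<in> set (p_structs P). ft_struct_ok P (FAnd \<phi> (s_ann d)) d) \<and>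
      (\<forall>d \<in> set (p_funs P). ft_fun_ok P (FAnd \<phi> (f_ann d)) d))"

section \<open>Variant generation\<close>

definition keep :: "'f set \<Rightarrow> ('f form \<times> 'b) list \<Rightarrow> ('f form \<times> 'b) list" where
  "keep p xs = filter (\<lambda>(a, _). models p a) xs"

fun var_expr :: "'f set \<Rightarrow> 'f form expr \<Rightarrow> unit expr" where
  "var_expr p (Lit n) = Lit n"
| "var_expr p Null = Null"
| "var_expr p (Par x) = Par x"
| "var_expr p (App f args) = App f (map (\<lambda>(a, e). ((), e)) (keep p (map (\<lambda>(a, e). (a, var_expr p e)) args)))"
| "var_expr p (Member e m) = Member (var_expr p e) m"
| "var_expr p (Assign e m e') = Assign (var_expr p e) m (var_expr p e')"
| "var_expr p (Cond e1 e2 e3) = Cond (var_expr p e1) (var_expr p e2) (var_expr p e3)"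
| "var_expr p (Seq es) = Seq (map (\<lambda>(a, e). ((), e)) (keep p (map (\<lambda>(a, e). (a, var_expr p e)) es)))"
| "var_expr p (Uop u e) = Uop u (var_expr p e)"
| "var_expr p (Bop b e e') = Bop b (var_expr p e) (var_expr p e')"
| "var_expr p (Malloc s) = Malloc s"
| "var_expr p (Mfree e) = Mfree (var_expr p e)"

definition var_sdef :: "'f set \<Rightarrow> 'f form sdef \<Rightarrow> unit sdef" where
  "var_sdef p d = SDef () (s_name d) (map (\<lambda>(a, Tm). ((), Tm)) (keep p (s_mems d)))"

definition var_fdef :: "'f set \<Rightarrow> 'f form fdef \<Rightarrow> unit fdef" where
  "var_fdef p d = FDef () (f_ret d) (f_name d)
      (map (\<lambda>(a, Tx). ((), Tx)) (keep p (f_pars d))) (var_expr p (f_body d))"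

definition variant :: "'f set \<Rightarrow> 'f clc_prog \<Rightarrow> lc_prog" where
  "variant p P =
     Prog (map (var_sdef p) (filter (\<lambda>d. models p (s_ann d)) (p_structs P)))
          (map (var_fdef p) (filter (\<lambda>d. models p (f_ann d)) (p_funs P)))"

fun expr_anns :: "'a expr \<Rightarrow> 'a set" where
  "expr_anns (App f args) = (\<Union>ae \<in> set args. insert (fst ae) (expr_anns (snd ae)))"
| "expr_anns (Member e m) = expr_anns e"
| "expr_anns (Assign e m e') = expr_anns e \<union> expr_anns e'"
| "expr_anns (Cond e1 e2 e3) = expr_anns e1 \<union> expr_anns e2 \<union> expr_anns e3"
| "expr_anns (Seq es) = (\<Union>ae \<in> set es. insert (fst ae) (expr_anns (snd ae)))"
| "expr_anns (Uop u e) = expr_anns e"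
| "expr_anns (Bop b e e') = expr_anns e \<union> expr_anns e'"
| "expr_anns (Mfree e) = expr_anns e"
| "expr_anns _ = {}"

definition prog_anns :: "'a prog \<Rightarrow> 'a set" where
  "prog_anns P =
     (\<Union>d \<in> set (p_structs P). insert (s_ann d) (fst ` set (s_mems d))) \<union>
     (\<Union>d \<in> set (p_funs P). insert (f_ann d) (fst ` set (f_pars d)) \<union> expr_anns (f_body d))"

text \<open>The annotation table AT is
  represented by the annotations stored at the annotable occurrences of Prg.\<close>
definition is_spl :: "'f set \<Rightarrow> 'f form \<Rightarrow> 'f clc_prog \<Rightarrow> bool" where
  "is_spl F \<phi> P =
     (finite F \<and> fvars \<phi> \<subseteq> F \<and> (\<forall>a \<in> prog_anns P. fvars a \<subseteq> F) \<and> wf_prog P)"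

end

theory Submission imports Defs begin

lemma find_filter: "find P (filter Q xs) = find (\<lambda>x. P x \<and> Q x) xs"
  by (induction xs) auto

lemma find_map': "find P (map f xs) = map_option f (find (P \<circ> f) xs)"
  by (induction xs) auto

lemma find_conj: "find P xs = Some x \<Longrightarrow> Q x \<Longrightarrow> find (\<lambda>x. P x \<and> Q x) xs = Some x"
  by (induction xs) (auto split: if_splits)

lemma find_SomeD': "find P xs = Some x \<Longrightarrow> x \<in> set xs \<and> P x"
  by (induction xs) (auto split: if_splits)

lemma entails_models: "entails \<theta> \<psi> \<Longrightarrow> models p \<theta> \<Longrightarrow> models p \<psi>"
  by (auto simp: entails_def FImp_def)

lemma models_FDisj: "models p (FDisj xs) \<longleftrightarrow> (\<exists>x\<in>set xs. models p x)"
  by (induction xs) (auto simp: FDisj_def)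

lemma list_all2_filter:
  "list_all2 Q xs ys \<Longrightarrow> (\<And>x y. Q x y \<Longrightarrow> A x \<longleftrightarrow> B y) \<Longrightarrow>
   list_all2 (\<lambda>x y. Q x y \<and> A x \<and> B y) (filter A xs) (filter B ys)"
  by (induction rule: list_all2_induct) auto

lemma list_all2_set: "list_all2 R xs ys \<Longrightarrow> list_all2 (\<lambda>x y. R x y \<and> x \<in> set xs \<and> y \<in> set ys) xs ys"
  by (auto simp: list_all2_conv_all_nth)

lemma list_all2_ex1: "list_all2 R xs ys \<Longrightarrow> x \<in> set xs \<Longrightarrow> \<exists>y. R x y"
  by (auto simp: list_all2_conv_all_nth in_set_conv_nth)

lemma var_list: "map (\<lambda>(a, e). ((), e)) (keep p (map (\<lambda>(a, e). (a, g e)) xs)) =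
   map (\<lambda>(a, e). ((), g e)) (filter (\<lambda>(a, e). models p a) xs)"
  by (induction xs) (auto simp: keep_def)

lemma fst_zip_filter: "length xs = length ys \<Longrightarrow>
   map fst (filter (\<lambda>(x, y). A x) (zip xs ys)) = filter A xs"
  by (induction xs ys rule: list_induct2) auto

lemma list_all2_zip_filter: "list_all2 R xs ys \<Longrightarrow>
   list_all2 (\<lambda>x y. R x y \<and> A x) (map fst (filter (\<lambda>(x, y). A x) (zip xs ys))) (map snd (filter (\<lambda>(x, y). A x) (zip xs ys)))"
  by (induction rule: list_all2_induct) auto

lemma seq_last:
  "length xs = length Ts \<Longrightarrow> (\<exists>x\<in>set xs. A x) \<Longrightarrow>
   (\<forall>i<length xs. Ts ! i \<noteq> last Ts \<longrightarrow> \<not> A (xs ! i) \<or> (\<exists>x\<in>set (drop (Suc i) xs). A x)) \<Longrightarrow>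
   last (map snd (filter (\<lambda>(x, y). A x) (zip xs Ts))) = last Ts"
proof (induction xs Ts rule: list_induct2)
  case Nil then show ?case by simp
next
  case (Cons x xs T Ts)
  show ?case
  proof (cases "\<exists>x\<in>set xs. A x")
    case True
    have ne: "xs \<noteq> []" using True by auto
    hence neT: "Ts \<noteq> []" using Cons.hyps by auto
    have "\<forall>i<length xs. Ts ! i \<noteq> last Ts \<longrightarrow> \<not> A (xs ! i) \<or> (\<exists>x\<in>set (drop (Suc i) xs). A x)"
    proof (intro allI impI)
      fix i assume "i < length xs" "Ts ! i \<noteq> last Ts"
      then show "\<not> A (xs ! i) \<or> (\<exists>x\<in>set (drop (Suc i) xs). A x)"
        using Cons.prems(2)[rule_format, of "Suc i"] neT by auto
    qed
    then have IH: "last (map snd (filter (\<lambda>(x, y). A x) (zip xs Ts))) = last Ts"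
      using Cons.IH True by blast
    obtain i where i: "i < length xs" "A (xs ! i)" using True by (auto simp: in_set_conv_nth)
    have "(xs ! i, Ts ! i) \<in> set (zip xs Ts)" using i Cons.hyps
      by (metis length_zip min.idem nth_mem nth_zip)
    then have "filter (\<lambda>(x, y). A x) (zip xs Ts) \<noteq> []"
      using i by (auto simp: filter_empty_conv)
    then show ?thesis using IH neT by auto
  next
    case False
    hence "filter (\<lambda>(x, y). A x) (zip xs Ts) = []"
      by (auto simp: filter_empty_conv dest: set_zip_leftD)
    moreover have "A x" using Cons.prems(1) False by auto
    moreover have "T = last (T # Ts)"
      using Cons.prems(2)[rule_format, of 0] False \<open>A x\<close> by (auto simp: set_drop_subset[THEN subsetD]) blast
    ultimately show ?thesis by simp
  qed
qed


definition good :: "'f clc_prog \<Rightarrow> 'f set \<Rightarrow> ty \<Rightarrow> bool" where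
  "good P p T = (\<forall>s. T = TStruct s \<longrightarrow> (\<exists>d. lookup_struct P s = Some d \<and> models p (s_ann d)))"

lemma lookup_struct_var:
  "lookup_struct P s = Some d \<Longrightarrow> models p (s_ann d) \<Longrightarrow> lookup_struct (variant p P) s = Some (var_sdef p d)"
  unfolding lookup_struct_def variant_def
  by (simp add: find_map' find_filter o_def var_sdef_def find_conj)

lemma lookup_fun_var:
  "lookup_fun P f = Some d \<Longrightarrow> models p (f_ann d) \<Longrightarrow> lookup_fun (variant p P) f = Some (var_fdef p d)"
  unfolding lookup_fun_def variant_def
  by (simp add: find_map' find_filter o_def var_fdef_def find_conj)

lemma struct_dom_var:
  "lookup_struct P s = Some d \<Longrightarrow> models p (s_ann d) \<Longrightarrow> s \<in> struct_dom (variant p P)"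
  unfolding lookup_struct_def variant_def struct_dom_def
  by (drule find_SomeD') (force simp: var_sdef_def)

lemma fun_dom_var:
  "lookup_fun P f = Some d \<Longrightarrow> models p (f_ann d) \<Longrightarrow> f \<in> fun_dom (variant p P)"
  unfolding lookup_fun_def variant_def fun_dom_def
  by (drule find_SomeD') (force simp: var_fdef_def)

lemma good_dom: "good P p T \<Longrightarrow> ty_structs T \<subseteq> struct_dom (variant p P)"
  by (cases T) (auto simp: good_def intro: struct_dom_var)

lemma subty_var: "subty P T1 T2 \<Longrightarrow> good P p T2 \<Longrightarrow> subty (variant p P) T1 T2"
  unfolding subty_def using good_dom by fastforce

lemma is_max_var: "is_max P T1 T2 T3 \<Longrightarrow> good P p T1 \<Longrightarrow> good P p T2 \<Longrightarrow>
   is_max (variant p P) T1 T2 T3 \<and> good P p T3"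
  unfolding is_max_def using subty_var by blast

lemma lookup_struct_dom: "s \<in> struct_dom P \<Longrightarrow> \<exists>d. lookup_struct P s = Some d"
  unfolding struct_dom_def lookup_struct_def
  by (cases "find (\<lambda>d. s_name d = s) (p_structs P)") (auto simp: find_None_iff)

lemma good_ann: "ty_structs T \<subseteq> struct_dom P \<Longrightarrow> models p (ty_ann P T) \<Longrightarrow> good P p T"
  by (cases T) (auto simp: good_def ty_ann_def dest!: lookup_struct_dom)

lemma member_facts: "lookup_member P s m = Some (a, T) \<Longrightarrow>
   \<exists>d m'. lookup_struct P s = Some d \<and> find (\<lambda>(a, T, m'). m' = m) (s_mems d) = Some (a, T, m')"
  unfolding lookup_member_def by (auto split: option.splits)

lemma member_var: "lookup_member P s m = Some (a, T) \<Longrightarrow> models p a \<Longrightarrow>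
   lookup_struct P s = Some d \<Longrightarrow> models p (s_ann d) \<Longrightarrow>
   lookup_member (variant p P) s m = Some ((), T)"
  apply (drule member_facts)
  apply (clarsimp simp: lookup_member_def lookup_struct_var)
  apply (simp add: var_sdef_def keep_def find_map' find_filter o_def case_prod_unfold)
  apply (drule find_conj[where Q="\<lambda>x. models p (fst x)"])
  by (auto simp: case_prod_unfold)

lemma sane_structs: "sane P \<Longrightarrow> prog_structs P \<subseteq> struct_dom P"
  by (simp add: sane_def)

lemma member_good:
  assumes "ft_prog_ok \<phi> P" "models p \<phi>" "lookup_member P s m = Some (a, T)" "models p a"
    "lookup_struct P s = Some d" "models p (s_ann d)"
  shows "good P p T"
proof -
  obtain d' m' where d': "lookup_struct P s = Some d'" "find (\<lambda>(a, T, m'). m' = m) (s_mems d') = Some (a, T, m')"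
    using member_facts[OF assms(3)] by blast
  have dd: "d' = d" using d' assms(5) by simp
  have mem: "(a, T, m) \<in> set (s_mems d)" using find_SomeD'[OF d'(2)] dd by auto
  have din: "d \<in> set (p_structs P)" using assms(5) find_SomeD' unfolding lookup_struct_def by fast
  have "ft_struct_ok P (FAnd \<phi> (s_ann d)) d" using assms(1) din by (simp add: ft_prog_ok_def)
  then have "models p (ty_ann P T)" using mem assms(2,4,6)
    by (auto simp: ft_struct_ok_def dest!: bspec entails_models simp: FImp_def)
  moreover have "ty_structs T \<subseteq> prog_structs P"
    using din mem unfolding prog_structs_def by blast
  then have "ty_structs T \<subseteq> struct_dom P"
    using assms(1) unfolding ft_prog_ok_def sane_def by blast
  ultimately show ?thesis by (rule good_ann[rotated])
qed

lemma fun_good: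
  assumes "ft_prog_ok \<phi> P" "models p \<phi>" "d \<in> set (p_funs P)" "models p (f_ann d)"
  shows "good P p (f_ret d)"
    and "(a, T, x) \<in> set (f_pars d) \<Longrightarrow> models p a \<Longrightarrow> good P p T"
proof -
  have ok: "ft_fun_ok P (FAnd \<phi> (f_ann d)) d" using assms by (simp add: ft_prog_ok_def)
  have th: "models p (FAnd \<phi> (f_ann d))" using assms by simp
  have "models p (ty_ann P (f_ret d))" using ok th by (auto simp: ft_fun_ok_def dest: entails_models)
  moreover have "ty_structs (f_ret d) \<subseteq> prog_structs P"
    using assms(3) unfolding prog_structs_def by blast
  then have "ty_structs (f_ret d) \<subseteq> struct_dom P"
    using assms(1) unfolding ft_prog_ok_def sane_def by blast
  ultimately show "good P p (f_ret d)" by (rule good_ann[rotated])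
  assume m: "(a, T, x) \<in> set (f_pars d)" "models p a"
  have "models p (ty_ann P T)" using ok th m
    by (auto simp: ft_fun_ok_def FImp_def dest!: bspec entails_models)
  moreover have "ty_structs T \<subseteq> prog_structs P"
    using assms(3) m unfolding prog_structs_def by blast
  then have "ty_structs T \<subseteq> struct_dom P"
    using assms(1) unfolding ft_prog_ok_def sane_def by blast
  ultimately show "good P p T" by (rule good_ann[rotated])
qed


lemma list_all2_last: "list_all2 R xs ys \<Longrightarrow> ys \<noteq> [] \<Longrightarrow> R (last xs) (last ys)"
  by (induction rule: list_all2_induct) (auto simp: list_all2_conv_all_nth)

lemma var_expr_App: "var_expr p (App f args) =
   App f (map (\<lambda>(a, e). ((), var_expr p e)) (filter (\<lambda>x. models p (fst x)) args))"
  by (simp only: var_expr.simps var_list) (simp add: case_prod_unfold)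

lemma var_expr_Seq: "var_expr p (Seq es) =
   Seq (map (\<lambda>(a, e). ((), var_expr p e)) (filter (\<lambda>x. models p (fst x)) es))"
  by (simp only: var_expr.simps var_list) (simp add: case_prod_unfold)

lemma keep_eq: "keep p xs = filter (\<lambda>x. models p (fst x)) xs"
  by (simp add: keep_def case_prod_unfold)

definition Qinv :: "'f clc_prog \<Rightarrow> 'f set \<Rightarrow> (vname \<rightharpoonup> ty) \<Rightarrow> unit expr \<Rightarrow> ty \<Rightarrow> bool" where
  "Qinv P p \<Gamma> e T = (lc_typ (variant p P) \<Gamma> e T \<and> good P p T \<and> wf_expr e \<and>
      expr_structs e \<subseteq> struct_dom (variant p P) \<and> expr_funs e \<subseteq> fun_dom (variant p P))"

definition Gok :: "'f clc_prog \<Rightarrow> 'f set \<Rightarrow> (vname \<rightharpoonup> ty) \<Rightarrow> (vname \<rightharpoonup> ty \<times> 'f form) \<Rightarrow> bool" where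
  "Gok P p \<Gamma> \<Delta> = (\<forall>x T \<psi>. \<Delta> x = Some (T, \<psi>) \<longrightarrow> models p \<psi> \<longrightarrow> \<Gamma> x = Some T \<and> good P p T)"

lemma main:
  assumes ok: "ft_prog_ok \<phi> P" and mphi: "models p \<phi>"
  shows "ft_typ P \<theta> \<Delta> e T \<Longrightarrow> Gok P p \<Gamma> \<Delta> \<Longrightarrow> models p \<theta> \<Longrightarrow> Qinv P p \<Gamma> (var_expr p e) T"
proof (induction rule: ft_typ.induct)
  case (FT_int \<theta> \<Delta> n)
  then show ?case by (auto simp: Qinv_def good_def intro: lc_typ.intros)
next
  case (FT_null \<theta> \<Delta>)
  then show ?case by (auto simp: Qinv_def good_def intro: lc_typ.intros)
next
  case (FT_par \<Delta> x T \<psi> \<theta>)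
  then have "models p \<psi>" using entails_models by blast
  then show ?case using FT_par by (auto simp: Qinv_def Gok_def intro: lc_typ.intros)
next
  case (FT_app f a T0 pars body \<theta> \<Delta> args)
  let ?V = "variant p P"
  define d where "d = FDef a T0 f pars body"
  have din: "d \<in> set (p_funs P)" using FT_app.hyps(1) find_SomeD' unfolding lookup_fun_def d_def by fast
  have ma: "models p a" using FT_app.hyps(2) FT_app.prems(2) by (rule entails_models)
  have lf: "lookup_fun ?V f = Some (FDef () T0 f (map (\<lambda>(a, Tx). ((), Tx)) (keep p pars)) (var_expr p body))"
    using lookup_fun_var[OF FT_app.hyps(1)] ma by (simp add: var_fdef_def)
  have gT0: "good P p T0" using fun_good(1)[OF ok mphi din] ma by (simp add: d_def)
  note L = list_all2_set[OF FT_app.IH]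
  note L2 = list_all2_filter[OF L, where A="\<lambda>x. models p (fst x)" and B="\<lambda>x. models p (fst x)"]
  have iff: "models p (fst x) = models p (fst y)" if "entails \<theta> (FIff (fst x) (fst y))" for x y
    using entails_models[OF that FT_app.prems(2)] by (auto simp: FIff_def FImp_def)
  have L3: "list_all2 (\<lambda>arg par. \<exists>T'. lc_typ ?V \<Gamma> (snd arg) T' \<and> subty ?V T' (fst (snd par)))
     (map (\<lambda>(a, e). ((), var_expr p e)) (filter (\<lambda>x. models p (fst x)) args))
     (map (\<lambda>(a, Tx). ((), Tx)) (keep p pars))"
    unfolding keep_eq list_all2_map1 list_all2_map2
    apply (rule list_all2_mono[OF L2])
    subgoal for x y using iff by blast
    subgoal for x y
    proof -
      assume H: "((\<exists>T'. (ft_typ P \<theta> \<Delta> (snd x) T' \<and> (Gok P p \<Gamma> \<Delta> \<longrightarrow> models p \<theta> \<longrightarrow> Qinv P p \<Gamma> (var_expr p (snd x)) T')) \<and>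
           subty P T' (fst (snd y)) \<and> entails \<theta> (FIff (fst x) (fst y))) \<and> x \<in> set args \<and> y \<in> set pars) \<and>
         models p (fst x) \<and> models p (fst y)"
      obtain b Ty xn where y: "y = (b, Ty, xn)" by (cases y) auto
      have gy: "good P p Ty" using fun_good(2)[OF ok mphi din, of b Ty xn] H ma by (simp add: d_def y)
      obtain T' where T': "Qinv P p \<Gamma> (var_expr p (snd x)) T'" "subty P T' Ty"
        using H FT_app.prems y by auto
      show ?thesis using T' gy subty_var[OF T'(2) gy] by (auto simp: y Qinv_def case_prod_unfold)
    qed
    done
  have allQ: "\<forall>x\<in>set args. \<exists>T'. Qinv P p \<Gamma> (var_expr p (snd x)) T'"
    using list_all2_ex1[OF FT_app.IH] FT_app.prems by blast
  have "lc_typ ?V \<Gamma> (var_expr p (App f args)) T0"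
    unfolding var_expr_App by (rule lc_typ.T_app[OF lf L3])
  moreover have "f \<in> fun_dom ?V" using fun_dom_var[OF FT_app.hyps(1)] ma by (simp)
  ultimately show ?case using allQ gT0
    by (auto simp: Qinv_def var_expr_App simp del: var_expr.simps) (metis snd_conv subsetD)+
next
  case (FT_member \<theta> \<Delta> e0 s m a T)
  have Q0: "Qinv P p \<Gamma> (var_expr p e0) (TStruct s)" using FT_member by blast
  then obtain d where d: "lookup_struct P s = Some d" "models p (s_ann d)" by (auto simp: Qinv_def good_def)
  have ma: "models p a" using FT_member.hyps FT_member.prems entails_models by blast
  have lm: "lookup_member (variant p P) s m = Some ((), T)" using member_var[OF FT_member.hyps(2) ma d] .
  have gT: "good P p T" using member_good[OF ok mphi FT_member.hyps(2) ma d] .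
  show ?case using Q0 lm gT by (auto simp: Qinv_def intro: lc_typ.T_member)
next
  case (FT_assign \<theta> \<Delta> e0 s m a T e1 T1)
  have Q0: "Qinv P p \<Gamma> (var_expr p e0) (TStruct s)" using FT_assign by blast
  have Q1: "Qinv P p \<Gamma> (var_expr p e1) T1" using FT_assign by blast
  then obtain d where d: "lookup_struct P s = Some d" "models p (s_ann d)" using Q0 by (auto simp: Qinv_def good_def)
  have ma: "models p a" using FT_assign.hyps FT_assign.prems entails_models by blast
  have lm: "lookup_member (variant p P) s m = Some ((), T)" using member_var[OF FT_assign.hyps(2) ma d] .
  have gT: "good P p T" using member_good[OF ok mphi FT_assign.hyps(2) ma d] .
  have st: "subty (variant p P) T1 T" using subty_var[OF FT_assign.hyps(5) gT] .
  show ?case using Q0 Q1 lm gT st by (auto simp: Qinv_def intro: lc_typ.T_assign)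
next
  case (FT_cond \<theta> \<Delta> e0 T0 e1 T1 e2 T2 T3)
  have Q0: "Qinv P p \<Gamma> (var_expr p e0) T0" using FT_cond by blast
  have Q1: "Qinv P p \<Gamma> (var_expr p e1) T1" using FT_cond by blast
  have Q2: "Qinv P p \<Gamma> (var_expr p e2) T2" using FT_cond by blast
  have mx: "is_max (variant p P) T1 T2 T3 \<and> good P p T3"
    using is_max_var[OF FT_cond.hyps(4)] Q1 Q2 by (auto simp: Qinv_def)
  show ?case using Q0 Q1 Q2 mx by (auto simp: Qinv_def intro: lc_typ.T_cond)
next
  case (FT_seq es \<theta> \<Delta> Ts)
  let ?V = "variant p P"
  let ?A = "\<lambda>x. models p (fst x)"
  let ?zs = "filter (\<lambda>(x, y). ?A x) (zip es Ts)"
  have len: "length es = length Ts" using FT_seq.IH by (rule list_all2_lengthD)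
  have ex: "\<exists>x\<in>set es. ?A x" using entails_models[OF FT_seq.hyps(2) FT_seq.prems(2)]
    by (auto simp: models_FDisj)
  have nl: "\<forall>i<length es. Ts ! i \<noteq> last Ts \<longrightarrow> \<not> ?A (es ! i) \<or> (\<exists>x\<in>set (drop (Suc i) es). ?A x)"
  proof (intro allI impI)
    fix i assume i: "i < length es" "Ts ! i \<noteq> last Ts"
    have "models p (neverLast i (map fst es))"
      using FT_seq.hyps(3) i entails_models[OF _ FT_seq.prems(2)] by blast
    then show "\<not> ?A (es ! i) \<or> (\<exists>x\<in>set (drop (Suc i) es). ?A x)"
      using i by (auto simp: neverLast_def models_FDisj drop_map)
  qed
  have lastT: "last (map snd ?zs) = last Ts" using seq_last[OF len ex nl] .
  have L: "list_all2 (\<lambda>x y. (ft_typ P (FAnd \<theta> (fst x)) \<Delta> (snd x) y \<and>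
      (Gok P p \<Gamma> \<Delta> \<longrightarrow> models p (FAnd \<theta> (fst x)) \<longrightarrow> Qinv P p \<Gamma> (var_expr p (snd x)) y)) \<and> ?A x)
     (filter ?A es) (map snd ?zs)"
    using list_all2_zip_filter[OF FT_seq.IH, of ?A] fst_zip_filter[OF len, of ?A] by simp
  have LQ: "list_all2 (\<lambda>x y. Qinv P p \<Gamma> (var_expr p (snd x)) y) (filter ?A es) (map snd ?zs)"
    by (rule list_all2_mono[OF L]) (use FT_seq.prems in auto)
  have ne: "filter ?A es \<noteq> []" using ex by (auto simp: filter_empty_conv)
  then have neT: "map snd ?zs \<noteq> []" using list_all2_lengthD[OF LQ] by auto
  have LT: "list_all2 (\<lambda>el T. lc_typ ?V \<Gamma> (snd el) T)
     (map (\<lambda>(a, e). ((), var_expr p e)) (filter ?A es)) (map snd ?zs)"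
    unfolding list_all2_map1 by (rule list_all2_mono[OF LQ]) (auto simp: Qinv_def)
  have "lc_typ ?V \<Gamma> (var_expr p (Seq es)) (last Ts)"
    unfolding var_expr_Seq lastT[symmetric] by (rule lc_typ.T_seq) (use ne LT in auto)
  moreover have "good P p (last Ts)"
    using list_all2_last[OF LQ neT] lastT by (simp add: Qinv_def)
  moreover have "\<forall>x\<in>set (filter ?A es). \<exists>T'. Qinv P p \<Gamma> (var_expr p (snd x)) T'"
    using list_all2_ex1[OF LQ] by blast
  ultimately show ?case using ne
    by (auto simp: Qinv_def var_expr_Seq simp del: var_expr.simps) (metis snd_conv subsetD)+
next
  case (FT_uop \<theta> \<Delta> e0 T0 u)
  have Q0: "Qinv P p \<Gamma> (var_expr p e0) T0" using FT_uop by blast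
  show ?case using Q0 FT_uop.hyps by (auto simp: Qinv_def good_def intro: lc_typ.T_uop)
next
  case (FT_bop \<theta> \<Delta> e1 T1 e2 T2 T3 b)
  have Q1: "Qinv P p \<Gamma> (var_expr p e1) T1" using FT_bop by blast
  have Q2: "Qinv P p \<Gamma> (var_expr p e2) T2" using FT_bop by blast
  have mx: "is_max (variant p P) T1 T2 T3 \<and> good P p T3"
    using is_max_var[OF FT_bop.hyps(3)] Q1 Q2 by (auto simp: Qinv_def)
  show ?case using Q1 Q2 mx FT_bop.hyps by (auto simp: Qinv_def good_def intro: lc_typ.T_bop)
next
  case (FT_malloc s d \<theta> \<Delta>)
  have md: "models p (s_ann d)" using FT_malloc entails_models by blast
  have "s \<in> struct_dom (variant p P)" using struct_dom_var[OF FT_malloc.hyps(1) md] .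
  then show ?case using FT_malloc.hyps md by (auto simp: Qinv_def good_def intro: lc_typ.T_malloc)
next
  case (FT_mfree \<theta> \<Delta> e0 s)
  have Q0: "Qinv P p \<Gamma> (var_expr p e0) (TStruct s)" using FT_mfree by blast
  show ?case using Q0 by (auto simp: Qinv_def good_def intro: lc_typ.T_mfree)
qed


lemma map_of_keep: "map_of (map (\<lambda>(a, T, x). (x, (T, a))) ps) x = Some (T, \<psi>) \<Longrightarrow> models p \<psi> \<Longrightarrow>
   map_of (map (\<lambda>(a, T, x). (x, T)) (map (\<lambda>(a, Tx). ((), Tx)) (keep p ps))) x = Some T"
  by (induction ps) (auto simp: keep_def split: if_splits)

lemma mem_good:
  assumes "ft_prog_ok \<phi> P" "models p \<phi>" "d \<in> set (p_structs P)" "models p (s_ann d)"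
    "(a, T, m) \<in> set (s_mems d)" "models p a"
  shows "good P p T"
proof -
  have "ft_struct_ok P (FAnd \<phi> (s_ann d)) d" using assms(1,3) by (simp add: ft_prog_ok_def)
  then have "models p (ty_ann P T)" using assms
    by (auto simp: ft_struct_ok_def dest!: bspec entails_models simp: FImp_def)
  moreover have "ty_structs T \<subseteq> prog_structs P"
    using assms(3,5) unfolding prog_structs_def by blast
  then have "ty_structs T \<subseteq> struct_dom P"
    using assms(1) unfolding ft_prog_ok_def sane_def by blast
  ultimately show ?thesis by (rule good_ann[rotated])
qed

lemma fun_body:
  assumes ok: "ft_prog_ok \<phi> P" and mphi: "models p \<phi>" and din: "d \<in> set (p_funs P)" and md: "models p (f_ann d)"
  shows "\<exists>T'. Qinv P p (map_of (map (\<lambda>(a, T, x). (x, T)) (f_pars (var_fdef p d)))) (var_expr p (f_body d)) T'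
           \<and> subty (variant p P) T' (f_ret d)"
proof -
  have "ft_fun_ok P (FAnd \<phi> (f_ann d)) d" using ok din by (simp add: ft_prog_ok_def)
  then obtain T' where T': "ft_typ P (FAnd \<phi> (f_ann d)) (map_of (map (\<lambda>(a, T, x). (x, (T, a))) (f_pars d))) (f_body d) T'"
    "subty P T' (f_ret d)" by (auto simp: ft_fun_ok_def)
  have G: "Gok P p (map_of (map (\<lambda>(a, T, x). (x, T)) (f_pars (var_fdef p d)))) (map_of (map (\<lambda>(a, T, x). (x, (T, a))) (f_pars d)))"
    unfolding Gok_def
  proof (intro allI impI)
    fix x T \<psi>
    assume h: "map_of (map (\<lambda>(a, T, x). (x, (T, a))) (f_pars d)) x = Some (T, \<psi>)" "models p \<psi>"
    have "(x, (T, \<psi>)) \<in> set (map (\<lambda>(a, T, x). (x, (T, a))) (f_pars d))" using map_of_SomeD[OF h(1)] .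
    then have "(\<psi>, T, x) \<in> set (f_pars d)" by auto
    then have "good P p T" using fun_good(2)[OF ok mphi din md] h(2) by blast
    then show "map_of (map (\<lambda>(a, T, x). (x, T)) (f_pars (var_fdef p d))) x = Some T \<and> good P p T"
      using map_of_keep[OF h] by (simp add: var_fdef_def)
  qed
  have "Qinv P p (map_of (map (\<lambda>(a, T, x). (x, T)) (f_pars (var_fdef p d)))) (var_expr p (f_body d)) T'"
    using main[OF ok mphi T'(1) G] mphi md by simp
  moreover have "subty (variant p P) T' (f_ret d)" using subty_var[OF T'(2) fun_good(1)[OF ok mphi din md]] .
  ultimately show ?thesis by blast
qed

theorem theorem4:
  fixes F :: "'f set" and \<phi> :: "'f form" and P :: "'f clc_prog" and p :: "'f set"
  assumes "is_spl F \<phi> P"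
    and "p \<subseteq> F" and "models p \<phi>"
    and "ft_prog_ok \<phi> P"
  shows "wf_prog (variant p P) \<and> lc_prog_ok (variant p P)"
proof -
  note ok = assms(4) and mphi = assms(3)
  have wfP: "wf_prog P" using assms(1) by (simp add: is_spl_def)
  let ?V = "variant p P"
  have structsV: "p_structs ?V = map (var_sdef p) (filter (\<lambda>d. models p (s_ann d)) (p_structs P))"
    by (simp add: variant_def)
  have funsV: "p_funs ?V = map (var_fdef p) (filter (\<lambda>d. models p (f_ann d)) (p_funs P))"
    by (simp add: variant_def)
  have FB: "\<And>d. d \<in> set (p_funs P) \<Longrightarrow> models p (f_ann d) \<Longrightarrow> \<exists>T'. Qinv P p (map_of (map (\<lambda>(a, T, x). (x, T)) (f_pars (var_fdef p d)))) (var_expr p (f_body d)) T'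
           \<and> subty ?V T' (f_ret d)"
    using fun_body[OF ok mphi] by blast
  have wfV: "wf_prog ?V"
    unfolding wf_prog_def structsV funsV
  proof (intro conjI ballI)
    show "distinct (map s_name (map (var_sdef p) (filter (\<lambda>d. models p (s_ann d)) (p_structs P))))"
      using wfP by (simp add: wf_prog_def var_sdef_def o_def distinct_map_filter)
    show "distinct (map f_name (map (var_fdef p) (filter (\<lambda>d. models p (f_ann d)) (p_funs P))))"
      using wfP by (simp add: wf_prog_def var_fdef_def o_def distinct_map_filter)
  next
    fix d assume "d \<in> set (map (var_sdef p) (filter (\<lambda>d. models p (s_ann d)) (p_structs P)))"
    then obtain d0 where d0: "d0 \<in> set (p_structs P)" "d = var_sdef p d0" by auto
    have "distinct (map (\<lambda>(a, T, m). m) (s_mems d0))" using wfP d0 by (simp add: wf_prog_def)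
    then show "distinct (map (\<lambda>(a, T, m). m) (s_mems d))"
      by (simp add: d0 var_sdef_def keep_def o_def case_prod_unfold distinct_map_filter)
  next
    fix d assume "d \<in> set (map (var_fdef p) (filter (\<lambda>d. models p (f_ann d)) (p_funs P)))"
    then obtain d0 where d0: "d0 \<in> set (p_funs P)" "models p (f_ann d0)" "d = var_fdef p d0" by auto
    have "distinct (map (\<lambda>(a, T, x). x) (f_pars d0))" using wfP d0 by (simp add: wf_prog_def)
    then show "distinct (map (\<lambda>(a, T, x). x) (f_pars d))"
      by (simp add: d0 var_fdef_def keep_def o_def case_prod_unfold distinct_map_filter)
    show "wf_expr (f_body d)" using FB[OF d0(1,2)] by (auto simp: d0 var_fdef_def Qinv_def)
  qed
  have funs_ok: "\<forall>d\<in>set (p_funs ?V). lc_fun_ok ?V d"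
  proof
    fix d assume "d \<in> set (p_funs ?V)"
    then obtain d0 where d0: "d0 \<in> set (p_funs P)" "models p (f_ann d0)" "d = var_fdef p d0"
      by (auto simp: funsV)
    show "lc_fun_ok ?V d" using FB[OF d0(1,2)]
      by (auto simp: lc_fun_ok_def Qinv_def d0(3)) (auto simp: var_fdef_def)
  qed
  have s1: "prog_structs ?V \<subseteq> struct_dom ?V"
  proof -
    have A: "s_name d \<in> struct_dom ?V" if "d \<in> set (p_structs ?V)" for d
      using that by (simp add: struct_dom_def)
    have B: "ty_structs T \<subseteq> struct_dom ?V" if Bd: "d \<in> set (p_structs ?V)" "(a, T, m) \<in> set (s_mems d)" for d a T m
    proof -
      obtain d0 where d0: "d0 \<in> set (p_structs P)" "models p (s_ann d0)" "d = var_sdef p d0"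
        using Bd(1) by (auto simp: structsV)
      obtain a0 where "(a0, T, m) \<in> set (s_mems d0)" "models p a0"
        using Bd(2) by (auto simp: d0(3) var_sdef_def keep_def)
      then show ?thesis using good_dom mem_good[OF ok mphi d0(1,2)] by blast
    qed
    have C: "ty_structs (f_ret d) \<union> (\<Union>(a, T, x) \<in> set (f_pars d). ty_structs T) \<union> expr_structs (f_body d) \<subseteq> struct_dom ?V"
      if Cd: "d \<in> set (p_funs ?V)" for d
    proof -
      obtain d0 where d0: "d0 \<in> set (p_funs P)" "models p (f_ann d0)" "d = var_fdef p d0"
        using Cd by (auto simp: funsV)
      have "ty_structs (f_ret d) \<subseteq> struct_dom ?V"
        using good_dom fun_good(1)[OF ok mphi d0(1,2)] by (simp add: d0(3) var_fdef_def)
      moreover have "ty_structs T \<subseteq> struct_dom ?V" if Pd: "(a, T, x) \<in> set (f_pars d)" for a T x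
      proof -
        obtain a0 where "(a0, T, x) \<in> set (f_pars d0)" "models p a0"
          using Pd by (auto simp: d0(3) var_fdef_def keep_def)
        then show ?thesis using good_dom fun_good(2)[OF ok mphi d0(1,2)] by blast
      qed
      moreover have "expr_structs (f_body d) \<subseteq> struct_dom ?V"
        using FB[OF d0(1,2)] by (auto simp: Qinv_def d0(3)) (auto simp: var_fdef_def)
      ultimately show ?thesis by blast
    qed
    show ?thesis unfolding prog_structs_def using A B C by blast
  qed
  have s2: "(\<Union>d \<in> set (p_funs ?V). insert (f_name d) (expr_funs (f_body d))) \<subseteq> fun_dom ?V"
  proof -
    have "insert (f_name d) (expr_funs (f_body d)) \<subseteq> fun_dom ?V" if Sd: "d \<in> set (p_funs ?V)" for d
    proof -
      obtain d0 where d0: "d0 \<in> set (p_funs P)" "models p (f_ann d0)" "d = var_fdef p d0"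
        using Sd by (auto simp: funsV)
      have "f_name d \<in> fun_dom ?V" using Sd by (simp add: fun_dom_def)
      moreover have "expr_funs (f_body d) \<subseteq> fun_dom ?V"
        using FB[OF d0(1,2)] by (auto simp: Qinv_def d0(3)) (auto simp: var_fdef_def)
      ultimately show ?thesis by blast
    qed
    then show ?thesis by blast
  qed
  have s3: "\<exists>a e. lookup_fun ?V ''main'' = Some (FDef a TInt ''main'' [] e)"
  proof -
    obtain d where d: "lookup_fun P ''main'' = Some d" "f_ann d = FTrue" using ok by (auto simp: ft_prog_ok_def)
    obtain a e where ae: "lookup_fun P ''main'' = Some (FDef a TInt ''main'' [] e)"
      using ok by (auto simp: ft_prog_ok_def sane_def)
    have "d = FDef a TInt ''main'' [] e" using d ae by simp
    then have "lookup_fun ?V ''main'' = Some (var_fdef p d)" using lookup_fun_var[OF d(1)] d(2) by simp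
    then show ?thesis using \<open>d = _\<close> by (simp add: var_fdef_def keep_def)
  qed
  show ?thesis using wfV funs_ok s1 s2 s3 by (simp add: lc_prog_ok_def sane_def)
qed

end
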